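(* For every $f\in L^{\infty}(\mathbb{R}_+^{\times})$, $\overline{H}_{\infty}(f)=\overline{L}_1(f)$. In particular, the summability methods $(H_\infty,\mathcal{D}(H_\infty))$ and $(L_1,\mathcal{D}(L_1))$ coincide: they have the same domain and assign the same value to each function in it.
   Context: $\mathbb{R}_+^{\times}=[1,\infty)$, $L^{\infty}(\mathbb{R}_+^{\times})$ the real-valued essentially bounded measurable functions on it. Let $(Uf)(x)=\frac1x\int_1^x f(t)\,dt$ and $\overline{H}_k(f)=\limsup_{x\to\infty}(U^kf)(x)$ for $k\ge1$; the sequence $\overline{H}_k(f)$ is nonincreasing in $k$ and bounded below, and $\overline{H}_\infty(f)=\lim_{k\to\infty}\overline{H}_k(f)$. Let $\overline{L}_1(f)=\lim_{\theta\to\infty}\limsup_{x\to\infty}\frac{1}{\log\theta}\int_x^{\theta x}f(t)\frac{dt}{t}$. For a sublinear functional $\overline{F}$ among these, the associated summability method $(F,\mathcal{D}(F))$ has domain $\mathcal{D}(F)=\{f:\overline{F}(f)=-\overline{F}(-f)\}$ and value $F(f)=\overline{F}(f)$ there. *)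

theory Defs
  imports "HOL-Analysis.Analysis"
begin

text \<open>Real-valued essentially bounded measurable functions on [1,\<infinity>).
  Functions are represented as real \<Rightarrow> real; only values on {1..} matter.\<close>
definition Linf :: "(real \<Rightarrow> real) set" where
  "Linf = {f. set_borel_measurable lborel {1..} f \<and>
              (\<exists>C. AE x in lborel. x \<in> {1..} \<longrightarrow> \<bar>f x\<bar> \<le> C)}"

definition U :: "(real \<Rightarrow> real) \<Rightarrow> real \<Rightarrow> real" where
  "U f x = (1 / x) * (LINT t:{1..x}|lborel. f t)"

definition H_upper :: "nat \<Rightarrow> (real \<Rightarrow> real) \<Rightarrow> ereal" where
  "H_upper k f = Limsup at_top (\<lambda>x. ereal ((U ^^ k) f x))"

definition H_inf_upper :: "(real \<Rightarrow> real) \<Rightarrow> ereal" where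
  "H_inf_upper f = lim (\<lambda>k. H_upper (Suc k) f)"

definition L1_upper :: "(real \<Rightarrow> real) \<Rightarrow> ereal" where
  "L1_upper f = Lim at_top (\<lambda>\<theta>. Limsup at_top
       (\<lambda>x. ereal ((1 / ln \<theta>) * (LINT t:{x..\<theta> * x}|lborel. f t / t))))"

definition sdomain :: "((real \<Rightarrow> real) \<Rightarrow> ereal) \<Rightarrow> (real \<Rightarrow> real) set" where
  "sdomain F = {f \<in> Linf. F f = - F (\<lambda>x. - f x)}"

end

theory Submission
  imports Defs
begin


definition bnd :: "real \<Rightarrow> (real \<Rightarrow> real) \<Rightarrow> bool" where
  "bnd C g \<longleftrightarrow> g \<in> borel_measurable borel \<and> (\<forall>t. \<bar>g t\<bar> \<le> C)"

lemma bnd_meas[measurable_dest]: "bnd C g \<Longrightarrow> g \<in> borel_measurable borel"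
  by (simp add: bnd_def)

lemma bnd_le: "bnd C g \<Longrightarrow> \<bar>g t\<bar> \<le> C"
  by (simp add: bnd_def)

lemma bnd_C: "bnd C g \<Longrightarrow> 0 \<le> C"
  using bnd_le[of C g 0] by linarith

lemma si_bound:
  fixes f :: "real \<Rightarrow> real"
  assumes [measurable]: "f \<in> borel_measurable borel" and b: "\<And>t. a \<le> t \<Longrightarrow> t \<le> b \<Longrightarrow> \<bar>f t\<bar> \<le> B"
  shows "set_integrable lborel {a..b} f"
  unfolding set_integrable_def
  by (rule integrableI_bounded_set_indicator[where B=B]) (use b in \<open>auto simp: emeasure_lborel_Icc_eq\<close>)

lemma int_le:
  fixes f g :: "real \<Rightarrow> real"
  assumes [measurable]: "f \<in> borel_measurable borel" "g \<in> borel_measurable borel"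
    and b: "\<And>t. a \<le> t \<Longrightarrow> t \<le> b \<Longrightarrow> f t \<le> g t"
    and bf: "\<And>t. a \<le> t \<Longrightarrow> t \<le> b \<Longrightarrow> \<bar>f t\<bar> \<le> B"
    and bg: "\<And>t. a \<le> t \<Longrightarrow> t \<le> b \<Longrightarrow> \<bar>g t\<bar> \<le> B"
  shows "(LINT t:{a..b}|lborel. f t) \<le> (LINT t:{a..b}|lborel. g t)"
  by (rule set_integral_mono) (use b si_bound[OF _ bf] si_bound[OF _ bg] in auto)

lemma int_const: "a \<le> b \<Longrightarrow> (LINT t:{a..b}|lborel. (c::real)) = c * (b - a)"
  by (simp add: set_integral_const)

lemma int_bound:
  fixes f :: "real \<Rightarrow> real"
  assumes [measurable]: "f \<in> borel_measurable borel" and ab: "a \<le> b"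
    and b: "\<And>t. a \<le> t \<Longrightarrow> t \<le> b \<Longrightarrow> \<bar>f t\<bar> \<le> B"
  shows "\<bar>LINT t:{a..b}|lborel. f t\<bar> \<le> B * (b - a)"
proof -
  have B: "0 \<le> B" if "a \<le> b" using b[of a] that by auto
  have hb: "-B \<le> f t \<and> f t \<le> B" if "a \<le> t" "t \<le> b" for t
    using b[OF that] by linarith
  have "(LINT t:{a..b}|lborel. f t) \<le> (LINT t:{a..b}|lborel. B)"
    by (rule int_le) (use b B ab hb in auto)
  moreover have "(LINT t:{a..b}|lborel. -B) \<le> (LINT t:{a..b}|lborel. f t)"
    by (rule int_le) (use b B ab hb in auto)
  ultimately show ?thesis using ab by (simp add: int_const abs_le_iff)
qed

lemma Icc_split:
  fixes f :: "real \<Rightarrow> real"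
  assumes "a \<le> b" "b \<le> c" "set_integrable lborel {a..c} f"
  shows "(LINT t:{a..c}|lborel. f t) = (LINT t:{a..b}|lborel. f t) + (LINT t:{b..c}|lborel. f t)"
proof -
  have i: "interval_lebesgue_integrable lborel (ereal a) (ereal c) f"
    unfolding interval_lebesgue_integrable_def using assms
    by (auto intro: set_integrable_subset[OF assms(3)])
  have "(LBINT t=ereal a..ereal b. f t) + (LBINT t=ereal b..ereal c. f t) = (LBINT t=ereal a..ereal c. f t)"
    by (rule interval_integral_sum) (use i assms in \<open>simp add: min_def max_def\<close>)
  then show ?thesis using assms by (simp add: interval_integral_Icc)
qed

lemma int_FTC:
  fixes f F :: "real \<Rightarrow> real"
  assumes "a \<le> b" "continuous_on {a..b} f"
    and "\<And>x. a \<le> x \<Longrightarrow> x \<le> b \<Longrightarrow> (F has_real_derivative f x) (at x within {a..b})"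
  shows "(LINT t:{a..b}|lborel. f t) = F b - F a"
proof -
  have "(LBINT t=ereal a..ereal b. f t) = F b - F a"
    by (rule interval_integral_FTC_finite)
       (use assms in \<open>auto simp: min_def max_def has_real_derivative_iff_has_vector_derivative\<close>)
  then show ?thesis using assms by (simp add: interval_integral_Icc)
qed

lemma int_inv: "0 < (a::real) \<Longrightarrow> a \<le> b \<Longrightarrow> (LINT t:{a..b}|lborel. 1 / t) = ln b - ln a"
  by (rule int_FTC[of a b "\<lambda>t. 1/t" ln]) (auto intro!: derivative_eq_intros continuous_intros simp: field_simps)

lemma int_inv2: assumes "0 < (a::real)" "a \<le> b" shows "(LINT t:{a..b}|lborel. 1 / t^2) = 1/a - 1/b"
proof -
  have "(LINT t:{a..b}|lborel. 1 / t^2) = (- 1/b) - (-1/a)"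
    by (rule int_FTC[of a b "\<lambda>t. 1/t^2" "\<lambda>t. - 1/t"]) (use assms in \<open>auto intro!: derivative_eq_intros continuous_intros simp: field_simps power2_eq_square\<close>)
  then show ?thesis by simp
qed



definition Fi :: "(real \<Rightarrow> real) \<Rightarrow> real \<Rightarrow> real" where
  "Fi g x = (LINT t:{1..x}|lborel. g t)"

lemma U_Fi: "U g x = (1/x) * Fi g x"
  by (simp add: U_def Fi_def)

lemma Fi_lt1: "x < 1 \<Longrightarrow> Fi g x = 0"
  by (simp add: Fi_def set_lebesgue_integral_def)

lemma Fi_lip_le:
  assumes g: "bnd C g" and xy: "x \<le> y"
  shows "\<bar>Fi g y - Fi g x\<bar> \<le> C * (y - x)"
proof (cases "y < 1")
  case True then show ?thesis using xy bnd_C[OF g] by (simp add: Fi_lt1)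
next
  case False
  note [measurable] = bnd_meas[OF g]
  show ?thesis
  proof (cases "x < 1")
    case True
    have "\<bar>Fi g y\<bar> \<le> C * (y - 1)" unfolding Fi_def
      by (rule int_bound) (use False g in \<open>auto intro: bnd_le\<close>)
    then show ?thesis using True False bnd_C[OF g] by (simp add: Fi_lt1) (smt (verit) mult_left_mono)
  next
    case x: False
    have "Fi g y = Fi g x + (LINT t:{x..y}|lborel. g t)" unfolding Fi_def
      by (rule Icc_split) (use x xy g in \<open>auto intro!: si_bound[where B=C] bnd_le[OF g]\<close>)
    moreover have "\<bar>LINT t:{x..y}|lborel. g t\<bar> \<le> C * (y - x)"
      by (rule int_bound) (use xy g in \<open>auto intro: bnd_le\<close>)
    ultimately show ?thesis by simp
  qed
qed

lemma Fi_cont: assumes "bnd C g" shows "continuous_on UNIV (Fi g)"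
proof (rule lipschitz_on_continuous_on[of C])
  show "C-lipschitz_on UNIV (Fi g)"
  proof (rule lipschitz_onI)
    fix x y :: real
    show "dist (Fi g x) (Fi g y) \<le> C * dist x y"
    proof (cases "x \<le> y")
      case True then show ?thesis using Fi_lip_le[OF assms True] by (simp add: dist_real_def abs_minus_commute)
    next
      case False then show ?thesis using Fi_lip_le[OF assms, of y x] by (simp add: dist_real_def)
    qed
  qed (use bnd_C[OF assms] in auto)
qed

lemma Fi_meas[measurable]: "bnd C g \<Longrightarrow> Fi g \<in> borel_measurable borel"
  by (rule borel_measurable_continuous_onI[OF Fi_cont])

lemma U_lt1: "x < 1 \<Longrightarrow> U g x = 0"
  by (simp add: U_Fi Fi_lt1)

lemma U_abs: assumes "bnd C g" shows "\<bar>U g x\<bar> \<le> C"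
proof (cases "x < 1")
  case True then show ?thesis using bnd_C[OF assms] by (simp add: U_lt1)
next
  case False
  have "\<bar>Fi g x - Fi g 1\<bar> \<le> C * (x - 1)" using Fi_lip_le[OF assms, of 1 x] False by simp
  moreover have "\<bar>Fi g 1\<bar> \<le> C * (1 - 1)" unfolding Fi_def
    by (rule int_bound) (use assms in \<open>auto intro: bnd_le\<close>)
  then have "Fi g 1 = 0" by simp
  ultimately have "\<bar>Fi g x\<bar> \<le> C * x" using bnd_C[OF assms] by (smt (verit) mult_left_mono)
  then show ?thesis using False by (simp add: U_Fi abs_mult divide_le_eq mult.commute)
qed

lemma bnd_U: assumes "bnd C g" shows "bnd C (U g)"
proof -
  have "U g = (\<lambda>x. (1/x) * Fi g x)" by (simp add: fun_eq_iff U_Fi)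
  then have "U g \<in> borel_measurable borel" using Fi_meas[OF assms] by simp
  then show ?thesis using U_abs[OF assms] by (simp add: bnd_def)
qed

lemma bnd_Upow: "bnd C g \<Longrightarrow> bnd C ((U ^^ k) g)"
  by (induction k) (auto intro: bnd_U)



lemma tri_fubini:
  fixes h :: "real \<Rightarrow> real \<Rightarrow> real"
  assumes g: "bnd C g"
    and hm[measurable]: "(\<lambda>p. h (snd p) (fst p)) \<in> borel_measurable (lborel \<Otimes>\<^sub>M lborel)"
    and hb: "\<And>t u. a \<le> t \<Longrightarrow> t \<le> b \<Longrightarrow> 1 \<le> u \<Longrightarrow> u \<le> t \<Longrightarrow> \<bar>h t u\<bar> \<le> D"
    and a1: "1 \<le> a" and ab: "a \<le> b"
  shows "(LINT t:{a..b}|lborel. (LINT u:{1..t}|lborel. g u * h t u))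
       = (LINT u:{1..b}|lborel. g u * (LINT t:{max a u..b}|lborel. h t u))"
proof -
  note [measurable] = bnd_meas[OF g]
  define \<Phi> where "\<Phi> u t = (if a \<le> t \<and> t \<le> b \<and> 1 \<le> u \<and> u \<le> t then g u * h t u else 0)" for u t
  have D0: "0 \<le> D" using hb[of a 1] a1 ab by auto
  have C0: "0 \<le> C" using bnd_C[OF g] .
  have meas: "(\<lambda>p. \<Phi> (fst p) (snd p)) \<in> borel_measurable (lborel \<Otimes>\<^sub>M lborel)"
    unfolding \<Phi>_def by measurable
  have int: "integrable (lborel \<Otimes>\<^sub>M lborel) (case_prod \<Phi>)"
  proof (rule integrableI_bounded_set[where A="{1..b} \<times> {a..b}" and B="C * D"])
    show "{1..b} \<times> {a..b} \<in> sets (lborel \<Otimes>\<^sub>M lborel)" by auto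
    show "case_prod \<Phi> \<in> borel_measurable (lborel \<Otimes>\<^sub>M lborel)"
      using meas by (simp add: case_prod_beta')
    show "emeasure (lborel \<Otimes>\<^sub>M lborel) ({1..b} \<times> {a..b}) < \<infinity>"
      by (subst lborel.emeasure_pair_measure_Times) (auto simp: ennreal_mult_less_top emeasure_lborel_Icc_eq)
    show "AE x in lborel \<Otimes>\<^sub>M lborel. x \<in> {1..b} \<times> {a..b} \<longrightarrow> norm (case_prod \<Phi> x) \<le> C * D"
      by (rule AE_I2) (use bnd_le[OF g] hb C0 D0 in \<open>auto simp: \<Phi>_def abs_mult intro!: mult_mono\<close>)
    show "AE x in lborel \<Otimes>\<^sub>M lborel. x \<notin> {1..b} \<times> {a..b} \<longrightarrow> case_prod \<Phi> x = 0"
      by (rule AE_I2) (auto simp: \<Phi>_def split: if_splits)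
  qed
  have L: "(LINT t:{a..b}|lborel. (LINT u:{1..t}|lborel. g u * h t u)) = (\<integral>t. (\<integral>u. \<Phi> u t \<partial>lborel) \<partial>lborel)"
    unfolding set_lebesgue_integral_def
    by (rule Bochner_Integration.integral_cong[OF refl])
       (auto simp: \<Phi>_def indicator_def intro!: Bochner_Integration.integral_cong)
  have R: "(LINT u:{1..b}|lborel. g u * (LINT t:{max a u..b}|lborel. h t u)) = (\<integral>u. (\<integral>t. \<Phi> u t \<partial>lborel) \<partial>lborel)"
  proof -
    have "indicator {1..b} u *\<^sub>R (g u * (\<integral>t. indicator {max a u..b} t *\<^sub>R h t u \<partial>lborel)) = (\<integral>t. \<Phi> u t \<partial>lborel)" for u
    proof -
      have "(\<integral>t. \<Phi> u t \<partial>lborel) = (\<integral>t. (indicator {1..b} u * g u) * (indicator {max a u..b} t * h t u) \<partial>lborel)"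
        by (rule Bochner_Integration.integral_cong) (auto simp: \<Phi>_def indicator_def)
      then show ?thesis by (simp only: integral_mult_right_zero) simp
    qed
    then show ?thesis unfolding set_lebesgue_integral_def by simp
  qed
  show ?thesis unfolding L R by (rule lborel_pair.Fubini_integral[OF int])
qed



lemma setcong: "(\<And>x. x \<in> A \<Longrightarrow> f x = g x) \<Longrightarrow> A \<in> sets lborel \<Longrightarrow> (LINT x:A|lborel. f x) = (LINT x:A|lborel. (g x::real))"
  by (rule set_lebesgue_integral_cong) auto

lemma identI:
  assumes g: "bnd C g" and x1: "1 \<le> x" and xy: "x \<le> y"
  shows "(LINT t:{x..y}|lborel. g t / t) = (LINT t:{x..y}|lborel. U g t / t) + U g y - U g x"
proof -
  note [measurable] = bnd_meas[OF g]
  have C0: "0 \<le> C" using bnd_C[OF g] .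
  have tf: "(LINT t:{x..y}|lborel. (LINT u:{1..t}|lborel. g u * (1 / t^2)))
       = (LINT u:{1..y}|lborel. g u * (LINT t:{max x u..y}|lborel. 1 / t^2))"
    by (rule tri_fubini[OF g, where D=1]) (use x1 xy in \<open>auto simp: power_le_one_iff\<close>)
  have l: "(LINT t:{x..y}|lborel. (LINT u:{1..t}|lborel. g u * (1 / t^2))) = (LINT t:{x..y}|lborel. U g t / t)"
    by (rule setcong) (auto simp: U_def power2_eq_square)
  have r1: "(LINT u:{1..y}|lborel. g u * (LINT t:{max x u..y}|lborel. 1 / t^2))
      = (LINT u:{1..y}|lborel. g u * (1 / max x u - 1 / y))"
  proof (rule setcong)
    fix u assume "u \<in> {1..y}"
    then have "(LINT t:{max x u..y}|lborel. 1 / t^2) = 1 / max x u - 1 / y"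
      by (intro int_inv2) (use x1 xy in auto)
    then show "g u * (LINT t:{max x u..y}|lborel. 1 / t^2) = g u * (1 / max x u - 1 / y)" by simp
  qed auto
  have si1: "set_integrable lborel {1..y} (\<lambda>u. g u * (1 / max x u - 1 / y))"
  proof (rule si_bound[where B=C])
    fix t assume t: "1 \<le> t" "t \<le> y"
    have m: "1 \<le> max x t" "max x t \<le> y" using t x1 xy by auto
    have "1 / y \<le> 1 / max x t" by (rule divide_left_mono) (use m in auto)
    moreover have "1 / max x t \<le> 1" using m by simp
    moreover have "0 \<le> 1 / y" using m by (simp add: max_def split: if_splits)
    ultimately have "\<bar>1 / max x t - 1 / y\<bar> \<le> 1" by linarith
    then show "\<bar>g t * (1 / max x t - 1 / y)\<bar> \<le> C"
      using bnd_le[OF g, of t] C0 by (simp add: abs_mult) (metis abs_ge_zero mult_mono mult.right_neutral)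
  qed measurable
  have i_g: "set_integrable lborel {x..y} g"
    by (rule si_bound[where B=C]) (use bnd_le[OF g] in auto)
  have i_gt: "set_integrable lborel {x..y} (\<lambda>u. g u / u)"
  proof (rule si_bound[where B=C])
    fix t assume "x \<le> t" "t \<le> y"
    then have "1 \<le> t" using x1 by simp
    then show "\<bar>g t / t\<bar> \<le> C" using bnd_le[OF g, of t] C0 mult_left_mono[of 1 t C]
      by (simp add: abs_div divide_le_eq)
  qed measurable
  have sp: "(LINT u:{1..y}|lborel. g u * (1 / max x u - 1 / y))
     = (LINT u:{1..x}|lborel. g u * (1 / max x u - 1 / y)) + (LINT u:{x..y}|lborel. g u * (1 / max x u - 1 / y))"
    by (rule Icc_split[OF x1 xy si1])
  have p1: "(LINT u:{1..x}|lborel. g u * (1 / max x u - 1 / y)) = Fi g x * (1 / x - 1 / y)"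
  proof -
    have "(LINT u:{1..x}|lborel. g u * (1 / max x u - 1 / y)) = (LINT u:{1..x}|lborel. g u * (1 / x - 1 / y))"
      by (rule setcong) auto
    then show ?thesis by (simp add: Fi_def)
  qed
  have p2: "(LINT u:{x..y}|lborel. g u * (1 / max x u - 1 / y)) = (LINT u:{x..y}|lborel. g u / u) - (LINT u:{x..y}|lborel. g u) / y"
  proof -
    have "(LINT u:{x..y}|lborel. g u * (1 / max x u - 1 / y)) = (LINT u:{x..y}|lborel. g u / u - g u / y)"
      by (rule setcong) (auto simp: max_def field_simps)
    also have "\<dots> = (LINT u:{x..y}|lborel. g u / u) - (LINT u:{x..y}|lborel. g u / y)"
      by (rule set_integral_diff(2)[OF i_gt]) (use i_g in simp)
    finally show ?thesis by simp
  qed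
  have Fy: "Fi g y = Fi g x + (LINT u:{x..y}|lborel. g u)"
    unfolding Fi_def by (rule Icc_split) (use x1 xy bnd_le[OF g] in \<open>auto intro!: si_bound[where B=C]\<close>)
  have E: "(LINT t:{x..y}|lborel. U g t / t) = Fi g x * (1 / x - 1 / y) + ((LINT u:{x..y}|lborel. g u / u) - (LINT u:{x..y}|lborel. g u) / y)"
    using tf l r1 sp p1 p2 by simp
  have uy: "U g y = Fi g x / y + (LINT u:{x..y}|lborel. g u) / y" by (simp add: U_Fi Fy add_divide_distrib)
  have ux: "U g x = Fi g x / x" by (simp add: U_Fi)
  have e2: "Fi g x * (1 / x - 1 / y) = Fi g x / x - Fi g x / y" by (simp add: algebra_simps)
  show ?thesis unfolding uy ux using E e2 by linarith
qed



definition Kf :: "nat \<Rightarrow> (real \<Rightarrow> real) \<Rightarrow> real \<Rightarrow> real" where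
  "Kf k g x = (1/x) * (LINT t:{1..x}|lborel. g t * (ln (x/t) ^ k / fact k))"

lemma Kf_lt1: "x < 1 \<Longrightarrow> Kf k g x = 0"
  by (simp add: Kf_def set_lebesgue_integral_def)

lemma Kf_0: "Kf 0 g x = U g x"
  by (simp add: Kf_def U_def)

lemma inner_FTC:
  fixes t x :: real
  assumes t: "1 \<le> t" "t \<le> x"
  shows "(LINT y:{t..x}|lborel. ln (y/t) ^ k / (fact k * y)) = ln (x/t) ^ Suc k / fact (Suc k)"
proof -
  have "(LINT y:{t..x}|lborel. ln (y/t) ^ k / (fact k * y)) = ln (x/t) ^ Suc k / fact (Suc k) - ln (t/t) ^ Suc k / fact (Suc k)"
  proof (rule int_FTC[of t x _ "\<lambda>y. ln (y/t) ^ Suc k / fact (Suc k)"])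
    show "continuous_on {t..x} (\<lambda>y. ln (y/t) ^ k / (fact k * y))"
      using t by (intro continuous_intros) auto
    fix y assume y: "t \<le> y" "y \<le> x"
    then have y0: "0 < y" using t by simp
    have D: "((\<lambda>y. ln (y/t)) has_real_derivative 1/y) (at y within {t..x})"
      using y0 t by (auto intro!: derivative_eq_intros simp: field_simps)
    have e: "of_nat (Suc k) * (1/y * ln (y/t) ^ (Suc k - Suc 0)) / fact (Suc k) = ln (y/t) ^ k / (fact k * y)"
      using y0 by (simp add: fact_Suc field_simps del: of_nat_Suc)
    show "((\<lambda>y. ln (y/t) ^ Suc k / fact (Suc k)) has_real_derivative ln (y/t) ^ k / (fact k * y)) (at y within {t..x})"
      by (rule DERIV_cong[OF DERIV_cdivide[OF DERIV_power[OF D]] e])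
  qed (use t in auto)
  then show ?thesis using t by simp
qed

lemma U_Kf:
  assumes g: "bnd C g"
  shows "U (Kf k g) x = Kf (Suc k) g x"
proof (cases "x < 1")
  case True then show ?thesis by (simp add: U_lt1 Kf_lt1)
next
  case False
  then have x1: "1 \<le> x" by simp
  note [measurable] = bnd_meas[OF g]
  have "(LINT y:{1..x}|lborel. Kf k g y)
     = (LINT y:{1..x}|lborel. (LINT t:{1..y}|lborel. g t * (ln (y/t) ^ k / (fact k * y))))"
  proof (rule setcong)
    fix y assume "y \<in> {1..x}"
    have "(LINT t:{1..y}|lborel. g t * (ln (y/t) ^ k / (fact k * y)))
        = (LINT t:{1..y}|lborel. (g t * (ln (y/t) ^ k / fact k)) * (1/y))"
      by (rule setcong) auto
    then show "Kf k g y = (LINT t:{1..y}|lborel. g t * (ln (y/t) ^ k / (fact k * y)))"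
      by (simp add: Kf_def)
  qed auto
  also have "\<dots> = (LINT t:{1..x}|lborel. g t * (LINT y:{max 1 t..x}|lborel. ln (y/t) ^ k / (fact k * y)))"
  proof (rule tri_fubini[OF g, where D="ln x ^ k"])
    show "(\<lambda>p::real\<times>real. ln (snd p / fst p) ^ k / (fact k * snd p)) \<in> borel_measurable (lborel \<Otimes>\<^sub>M lborel)"
      by measurable
    fix y t assume yt: "1 \<le> y" "y \<le> x" "1 \<le> t" "t \<le> y"
    have l0: "0 \<le> ln (y/t)" using yt by simp
    have "x * 1 \<le> x * t" by (rule mult_left_mono) (use yt in auto)
    then have "y \<le> x * t" using yt by linarith
    then have "y / t \<le> x" using yt by (simp add: divide_le_eq)
    then have l1: "ln (y/t) \<le> ln x" using yt by simp
    have p0: "0 \<le> ln (y/t) ^ k" using l0 by simp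
    have p1: "ln (y/t) ^ k \<le> ln x ^ k" by (rule power_mono[OF l1 l0])
    have d1: "1 * 1 \<le> fact k * y" by (rule mult_mono) (use yt in \<open>auto simp: fact_ge_1\<close>)
    have "ln (y/t) ^ k * 1 \<le> ln (y/t) ^ k * (fact k * y)" by (rule mult_left_mono) (use d1 p0 in auto)
    then have "ln (y/t) ^ k / (fact k * y) \<le> ln (y/t) ^ k" using d1 by (simp add: divide_le_eq)
    moreover have "0 \<le> ln (y/t) ^ k / (fact k * y)" using p0 d1 by simp
    ultimately show "\<bar>ln (y/t) ^ k / (fact k * y)\<bar> \<le> ln x ^ k" using p1 by simp
  qed (use x1 in auto)
  also have "\<dots> = (LINT t:{1..x}|lborel. g t * (ln (x/t) ^ Suc k / fact (Suc k)))"
    by (rule setcong) (auto simp: inner_FTC)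
  finally show ?thesis by (simp add: U_def Kf_def)
qed

lemma Upow_Kf: "bnd C g \<Longrightarrow> (U ^^ Suc k) g = Kf k g"
proof (induction k)
  case 0 then show ?case by (simp add: fun_eq_iff Kf_0)
next
  case (Suc k)
  have IH: "(U ^^ Suc k) g = Kf k g" by (rule Suc.IH[OF Suc.prems])
  have "(U ^^ Suc (Suc k)) g = U ((U ^^ Suc k) g)" by (simp only: funpow.simps comp_apply)
  also have "\<dots> = U (Kf k g)" by (simp only: IH)
  also have "\<dots> = Kf (Suc k) g" using U_Kf[OF Suc.prems] by (simp add: fun_eq_iff)
  finally show ?case .
qed



definition ak :: "nat \<Rightarrow> real" where "ak m = exp (- real m) * real m ^ m / fact m"

lemma ak_nonneg: "0 \<le> ak m" by (simp add: ak_def)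

lemma key_ineq:
  fixes l :: real assumes l: "0 \<le> l" and m: "1 \<le> m"
  shows "exp (- l) * l ^ m \<le> exp (- real m) * real m ^ m"
proof (cases "l = 0")
  case True then show ?thesis using m by (simp add: zero_power)
next
  case False
  then have l0: "0 < l" using l by simp
  have m0: "0 < real m" using m by simp
  have "ln (l / real m) \<le> l / real m - 1" by (rule ln_le_minus_one) (use l0 m0 in simp)
  then have "real m * ln (l / real m) \<le> real m * (l / real m - 1)" by (rule mult_left_mono) simp
  then have "real m * ln l - real m * ln (real m) \<le> l - real m"
    using l0 m0 by (simp add: ln_div right_diff_distrib)
  then have "- l + real m * ln l \<le> - real m + real m * ln (real m)" by linarith
  then have E: "exp (- l + real m * ln l) \<le> exp (- real m + real m * ln (real m))" by simp
  have e1: "exp (real m * ln l) = l ^ m" using l0 by (simp add: exp_of_nat_mult)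
  have e2: "exp (real m * ln (real m)) = real m ^ m" using m0 by (simp add: exp_of_nat_mult)
  have "exp (- l + real m * ln l) = exp (- l) * l ^ m" by (simp only: exp_add e1)
  moreover have "exp (- real m + real m * ln (real m)) = exp (- real m) * real m ^ m" by (simp only: exp_add e2)
  ultimately show ?thesis using E by simp
qed

lemma int_abs_le:
  fixes f w :: "real \<Rightarrow> real"
  assumes [measurable]: "f \<in> borel_measurable borel" "w \<in> borel_measurable borel" and ab: "a \<le> b"
    and b: "\<And>t. a \<le> t \<Longrightarrow> t \<le> b \<Longrightarrow> \<bar>f t\<bar> \<le> w t"
    and bw: "\<And>t. a \<le> t \<Longrightarrow> t \<le> b \<Longrightarrow> \<bar>w t\<bar> \<le> B"
  shows "\<bar>LINT t:{a..b}|lborel. f t\<bar> \<le> (LINT t:{a..b}|lborel. w t)"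
proof -
  have bf: "\<bar>f t\<bar> \<le> B" if "a \<le> t" "t \<le> b" for t using b[OF that] bw[OF that] by linarith
  have hb: "- w t \<le> f t" "f t \<le> w t" if "a \<le> t" "t \<le> b" for t using b[OF that] by linarith+
  have 1: "(LINT t:{a..b}|lborel. f t) \<le> (LINT t:{a..b}|lborel. w t)"
    by (rule int_le[where B=B]) (use hb bw bf in \<open>auto simp: abs_le_iff\<close>)
  have 2: "(LINT t:{a..b}|lborel. - w t) \<le> (LINT t:{a..b}|lborel. f t)"
    by (rule int_le[where B=B]) (use hb bw bf in \<open>auto simp: abs_le_iff\<close>)
  have 3: "(LINT t:{a..b}|lborel. - w t) = - (LINT t:{a..b}|lborel. w t)"
    by (rule set_integral_uminus) (rule si_bound[where B=B]; use bw in auto)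
  show ?thesis using 1 2 3 by linarith
qed



lemma cont_bnd:
  fixes h :: "real \<Rightarrow> real"
  assumes "continuous_on {a..b} h"
  obtains B where "\<And>t. a \<le> t \<Longrightarrow> t \<le> b \<Longrightarrow> \<bar>h t\<bar> \<le> B"
  using continuous_on_compact_bound[OF compact_Icc assms] by (metis atLeastAtMost_iff real_norm_def)

lemma si_gh:
  fixes h :: "real \<Rightarrow> real"
  assumes g: "bnd C g" and [measurable]: "h \<in> borel_measurable borel" and c: "continuous_on {a..b} h"
  shows "set_integrable lborel {a..b} (\<lambda>t. g t * h t)"
proof -
  note [measurable] = bnd_meas[OF g]
  obtain B where B: "\<And>t. a \<le> t \<Longrightarrow> t \<le> b \<Longrightarrow> \<bar>h t\<bar> \<le> B" using cont_bnd[OF c] by blast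
  show ?thesis
  proof (rule si_bound[where B="C * B"])
    fix t assume "a \<le> t" "t \<le> b"
    then show "\<bar>g t * h t\<bar> \<le> C * B" using bnd_le[OF g, of t] B[of t] bnd_C[OF g]
      by (simp add: abs_mult mult_mono)
  qed measurable
qed

lemma phi_deriv:
  fixes x t :: real and k :: nat
  assumes x: "0 < x" and t: "0 < t"
  shows "((\<lambda>t. t * ln (x/t) ^ Suc k / fact (Suc k)) has_real_derivative
            ln (x/t) ^ Suc k / fact (Suc k) - ln (x/t) ^ k / fact k) (at t within S)"
proof -
  have D: "((\<lambda>t. ln (x/t)) has_real_derivative - 1/t) (at t within S)"
    using x t by (auto intro!: derivative_eq_intros simp: field_simps power2_eq_square)
  have D2: "((\<lambda>t. ln (x/t) ^ Suc k) has_real_derivative of_nat (Suc k) * (- 1/t * ln (x/t) ^ (Suc k - Suc 0))) (at t within S)"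
    by (rule DERIV_power[OF D])
  have D3: "((\<lambda>t. t * ln (x/t) ^ Suc k) has_real_derivative 1 * ln (x/t) ^ Suc k + of_nat (Suc k) * (- 1/t * ln (x/t) ^ (Suc k - Suc 0)) * t) (at t within S)"
    by (rule DERIV_mult[OF DERIV_ident D2])
  have e: "(1 * ln (x/t) ^ Suc k + of_nat (Suc k) * (- 1/t * ln (x/t) ^ (Suc k - Suc 0)) * t) / fact (Suc k)
     = ln (x/t) ^ Suc k / fact (Suc k) - ln (x/t) ^ k / fact k"
    using t by (simp add: fact_Suc field_simps del: of_nat_Suc)
  show ?thesis by (rule DERIV_cong[OF DERIV_cdivide[OF D3] e])
qed



lemma Kf_diff:
  assumes g: "bnd C g"
  shows "\<bar>Kf k g x - Kf (Suc k) g x\<bar> \<le> 2 * C * ak (Suc k)"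
proof (cases "x < 1")
  case True then show ?thesis using bnd_C[OF g] ak_nonneg[of "Suc k"] by (simp add: Kf_lt1)
next
  case False
  then have x1: "1 \<le> x" by simp
  then have x0: "0 < x" by simp
  note [measurable] = bnd_meas[OF g]
  have C0: "0 \<le> C" using bnd_C[OF g] .
  define m where "m = Suc k"
  define \<phi> where "\<phi> t = t * ln (x/t) ^ m / fact m" for t
  define d where "d t = ln (x/t) ^ m / fact m - ln (x/t) ^ k / fact k" for t
  have dm[measurable]: "d \<in> borel_measurable borel" unfolding d_def by measurable
  have dc: "continuous_on {a..b} d" if "0 < a" for a b
    unfolding d_def using that x0 by (intro continuous_intros) auto
  have deriv: "(\<phi> has_real_derivative d t) (at t within S)" if "0 < t" for t S
    unfolding \<phi>_def d_def m_def using phi_deriv[OF x0 that] .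
  have dfac: "d t = (ln (x/t) ^ k / fact k) * (ln (x/t) / real m - 1)" for t
    unfolding d_def m_def by (simp add: fact_Suc field_simps del: of_nat_Suc)
  have dneg: "d t \<le> 0" if "0 < t" "t \<le> x" "ln (x/t) \<le> real m" for t
  proof -
    have "0 \<le> ln (x/t)" using that by simp
    then have a: "0 \<le> ln (x/t) ^ k / fact k" by simp
    have b: "ln (x/t) / real m - 1 \<le> 0" using that by (simp add: m_def divide_le_eq)
    show ?thesis unfolding dfac using mult_nonneg_nonpos[OF a b] .
  qed
  have dpos: "0 \<le> d t" if "0 < t" "real m \<le> ln (x/t)" for t
  proof -
    have "0 \<le> ln (x/t)" using that by (simp add: m_def)
    moreover have "0 \<le> ln (x/t) / real m - 1" using that by (simp add: m_def le_divide_eq)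
    ultimately show ?thesis unfolding dfac by simp
  qed
  define p where "p = max 1 (x * exp (- real m))"
  have p1: "1 \<le> p" unfolding p_def by simp
  have px: "p \<le> x" unfolding p_def using x1 by (simp add: mult_le_cancel_left1)
  have \<phi>x: "\<phi> x = 0" by (simp add: \<phi>_def m_def)
  have \<phi>1: "0 \<le> \<phi> 1" using x1 by (simp add: \<phi>_def)
  have FTC: "(LINT t:{a..b}|lborel. d t) = \<phi> b - \<phi> a" if "0 < a" "a \<le> b" for a b
    by (rule int_FTC) (use that dc[of a b] deriv in auto)
  have I2: "\<bar>LINT t:{p..x}|lborel. g t * d t\<bar> \<le> C * \<phi> p"
  proof -
    obtain B where B: "\<And>t. p \<le> t \<Longrightarrow> t \<le> x \<Longrightarrow> \<bar>d t\<bar> \<le> B" using cont_bnd[OF dc[of p x]] p1 by auto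
    have "\<bar>LINT t:{p..x}|lborel. g t * d t\<bar> \<le> (LINT t:{p..x}|lborel. C * (- d t))"
    proof (rule int_abs_le[where B="C * B"])
      fix t assume t: "p \<le> t" "t \<le> x"
      have "x * exp (- real m) \<le> t" using t p_def by simp
      then have "x / t \<le> exp (real m)" using t p1 by (simp add: divide_le_eq exp_minus field_simps)
      then have "ln (x/t) \<le> ln (exp (real m))" using t p1 x1 by (subst ln_le_cancel_iff) auto
      then have "ln (x/t) \<le> real m" by simp
      then have "d t \<le> 0" using dneg[of t] t p1 by simp
      then show "\<bar>g t * d t\<bar> \<le> C * - d t" using bnd_le[OF g, of t] by (simp add: abs_mult mult_right_mono_neg)
      show "\<bar>C * - d t\<bar> \<le> C * B" using B[OF t] C0 by (simp add: abs_mult mult_left_mono)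
    qed (use px in auto)
    also have "\<dots> = - C * (LINT t:{p..x}|lborel. d t)"
    proof -
      have idp: "set_integrable lborel {p..x} d" by (rule si_bound[where B=B]) (use B in auto)
      have "(LINT t:{p..x}|lborel. C * (- d t)) = C * (LINT t:{p..x}|lborel. - d t)"
        by (rule set_integral_mult_right)
      then show ?thesis using set_integral_uminus[OF idp] by simp
    qed
    also have "\<dots> = C * \<phi> p" using FTC[of p x] p1 px \<phi>x by simp
    finally show ?thesis .
  qed
  have I1: "\<bar>LINT t:{1..p}|lborel. g t * d t\<bar> \<le> C * \<phi> p"
  proof (cases "p = 1")
    case True
    have "\<bar>LINT t:{1..p}|lborel. g t * d t\<bar> \<le> \<bar>g 1 * d 1\<bar> * (p - 1)"
      by (rule int_bound) (use True in auto)
    then show ?thesis using True C0 \<phi>1 by simp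
  next
    case False
    then have pe: "p = x * exp (- real m)" unfolding p_def by auto
    obtain B where B: "\<And>t. 1 \<le> t \<Longrightarrow> t \<le> p \<Longrightarrow> \<bar>d t\<bar> \<le> B" using cont_bnd[OF dc[of 1 p]] by auto
    have "\<bar>LINT t:{1..p}|lborel. g t * d t\<bar> \<le> (LINT t:{1..p}|lborel. C * d t)"
    proof (rule int_abs_le[where B="C * B"])
      fix t assume t: "1 \<le> t" "t \<le> p"
      have "exp (real m) \<le> x / t" using t pe by (simp add: le_divide_eq exp_minus field_simps)
      then have "ln (exp (real m)) \<le> ln (x/t)" using t x1 by (subst ln_le_cancel_iff) auto
      then have "real m \<le> ln (x/t)" by simp
      then have "0 \<le> d t" using dpos[of t] t by simp
      then show "\<bar>g t * d t\<bar> \<le> C * d t" using bnd_le[OF g, of t] by (simp add: abs_mult mult_right_mono)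
      show "\<bar>C * d t\<bar> \<le> C * B" using B[OF t] C0 by (simp add: abs_mult mult_left_mono)
    qed (use p1 in auto)
    also have "\<dots> = C * (\<phi> p - \<phi> 1)" using FTC[of 1 p] p1 by simp
    also have "\<dots> \<le> C * \<phi> p" using C0 \<phi>1 by (simp add: mult_left_mono)
    finally show ?thesis .
  qed
  have ik: "set_integrable lborel {1..x} (\<lambda>t. g t * (ln (x/t) ^ k / fact k))"
    by (rule si_gh[OF g]) (use x0 in \<open>auto intro!: continuous_intros\<close>)
  have im: "set_integrable lborel {1..x} (\<lambda>t. g t * (ln (x/t) ^ m / fact m))"
    by (rule si_gh[OF g]) (use x0 in \<open>auto intro!: continuous_intros\<close>)
  have igd: "set_integrable lborel {1..x} (\<lambda>t. g t * d t)"
    by (rule si_gh[OF g dm dc]) simp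
  have "Kf k g x - Kf m g x = (1/x) * ((LINT t:{1..x}|lborel. g t * (ln (x/t) ^ k / fact k)) - (LINT t:{1..x}|lborel. g t * (ln (x/t) ^ m / fact m)))"
    by (simp add: Kf_def right_diff_distrib)
  also have "\<dots> = (1/x) * (LINT t:{1..x}|lborel. g t * (ln (x/t) ^ k / fact k) - g t * (ln (x/t) ^ m / fact m))"
    using set_integral_diff(2)[OF ik im] by simp
  also have "\<dots> = - (1/x) * (LINT t:{1..x}|lborel. g t * d t)"
  proof -
    have "(LINT t:{1..x}|lborel. g t * (ln (x/t) ^ k / fact k) - g t * (ln (x/t) ^ m / fact m)) = (LINT t:{1..x}|lborel. - (g t * d t))"
      by (rule setcong) (auto simp: d_def algebra_simps)
    also have "\<dots> = - (LINT t:{1..x}|lborel. g t * d t)" by (rule set_integral_uminus[OF igd])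
    finally show ?thesis by simp
  qed
  finally have eq: "Kf k g x - Kf m g x = - (1/x) * (LINT t:{1..x}|lborel. g t * d t)" .
  have split: "(LINT t:{1..x}|lborel. g t * d t) = (LINT t:{1..p}|lborel. g t * d t) + (LINT t:{p..x}|lborel. g t * d t)"
    by (rule Icc_split[OF p1 px igd])
  have "\<bar>LINT t:{1..x}|lborel. g t * d t\<bar> \<le> 2 * C * \<phi> p" using split I1 I2 by linarith
  then have A: "\<bar>Kf k g x - Kf m g x\<bar> \<le> 2 * C * (\<phi> p / x)"
    unfolding eq using x0 by (simp add: abs_mult divide_le_eq field_simps)
  have "\<phi> p / x = exp (- ln (x/p)) * ln (x/p) ^ m / fact m"
    using x0 p1 by (simp add: \<phi>_def exp_minus)
  also have "\<dots> \<le> exp (- real m) * real m ^ m / fact m"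
    by (rule divide_right_mono[OF key_ineq]) (use px p1 in \<open>auto simp: m_def\<close>)
  finally have "\<phi> p / x \<le> ak m" by (simp add: ak_def)
  then have "2 * C * (\<phi> p / x) \<le> 2 * C * ak m" using C0 by (intro mult_left_mono) auto
  with A show ?thesis unfolding m_def by linarith
qed



lemma ln_bound:
  fixes x :: real assumes x: "0 \<le> x" "x \<le> 1"
  shows "ln (1 + x) \<le> x - x^2/6"
proof -
  define G where "G y = y - y^2/6 - ln (1 + y)" for y :: real
  have "G 0 \<le> G x"
  proof (rule DERIV_nonneg_imp_nondecreasing[OF x(1)])
    fix y assume y: "0 \<le> y" "y \<le> x"
    have "(G has_real_derivative 1 - y/3 - 1/(1+y)) (at y)"
      unfolding G_def using y by (auto intro!: derivative_eq_intros simp: field_simps power2_eq_square)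
    moreover have "0 \<le> 1 - y/3 - 1/(1+y)"
    proof -
      have "y * y \<le> y * 2" using mult_left_mono[of y 2 y] y x by simp
      then have "1 \<le> (1 - y/3) * (1 + y)" using y x by (simp add: algebra_simps power2_eq_square)
      then show ?thesis using y by (simp add: field_simps)
    qed
    ultimately show "\<exists>d. (G has_real_derivative d) (at y) \<and> 0 \<le> d" by blast
  qed
  then show ?thesis by (simp add: G_def)
qed

lemma ak_step:
  assumes m: "1 \<le> m"
  shows "ak (Suc m) * real (Suc m) powr (1/6) \<le> ak m * real m powr (1/6)"
proof -
  have m0: "0 < real m" using m by simp
  define x where "x = 1 / real m"
  have x0: "0 < x" "x \<le> 1" using m by (auto simp: x_def)
  have ee: "exp (real (Suc m)) = exp 1 * exp (real m)" by (simp add: exp_add[symmetric])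
  have r: "ak (Suc m) = ak m * ((real m + 1) / real m) ^ m * exp (-1)"
    using m0 by (simp add: ak_def fact_Suc power_divide exp_minus ee field_simps del: of_nat_Suc) (simp add: add.commute)
  have lb: "ln (1 + x) \<le> x - x^2/6" by (rule ln_bound) (use x0 in auto)
  have "(real m + 1/6) * ln (1 + x) \<le> (real m + 1/6) * (x - x^2/6)"
    by (rule mult_left_mono[OF lb]) simp
  also have "\<dots> = 1 - x^2/36" using m0 by (simp add: x_def field_simps power2_eq_square)
  also have "\<dots> \<le> 1" by simp
  finally have key: "(real m + 1/6) * ln (1 + x) \<le> 1" .
  have "1 + x = (real m + 1) / real m" using m0 by (simp add: x_def field_simps)
  then have key2: "real m * ln ((real m + 1) / real m) - 1 + 1/6 * ln (real m + 1) \<le> 1/6 * ln (real m)"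
    using key m0 by (simp add: ln_div algebra_simps)
  have e1: "((real m + 1) / real m) ^ m = exp (real m * ln ((real m + 1) / real m))"
    using m0 by (simp add: exp_of_nat_mult)
  have p1: "(real m + 1) powr (1/6) = exp (1/6 * ln (real m + 1))" using m0 by (simp add: powr_def)
  have "((real m + 1) / real m) ^ m * exp (-1) * (real m + 1) powr (1/6)
      = exp (real m * ln ((real m + 1) / real m) + (-1) + 1/6 * ln (real m + 1))"
    by (simp only: e1 p1 exp_add)
  also have "\<dots> \<le> exp (1/6 * ln (real m))" using key2 by simp
  also have "\<dots> = real m powr (1/6)" using m0 by (simp add: powr_def)
  finally have "((real m + 1) / real m) ^ m * exp (-1) * (real m + 1) powr (1/6) \<le> real m powr (1/6)" .
  then have "ak m * (((real m + 1) / real m) ^ m * exp (-1) * (real m + 1) powr (1/6)) \<le> ak m * real m powr (1/6)"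
    by (rule mult_left_mono) (simp add: ak_nonneg)
  then show ?thesis unfolding r by (simp add: mult.assoc add.commute)
qed

lemma ak_bound: "1 \<le> m \<Longrightarrow> ak m * real m powr (1/6) \<le> exp (-1)"
proof (induction m rule: dec_induct)
  case base then show ?case by (simp add: ak_def)
next
  case (step m) then show ?case using ak_step[of m] by simp
qed

lemma ak_lim: "(\<lambda>k. ak (Suc k)) \<longlonglongrightarrow> 0"
proof -
  have "(\<lambda>m. exp (-1) * real m powr (- 1/6)) \<longlonglongrightarrow> exp (-1) * 0"
    by (intro tendsto_mult tendsto_const tendsto_neg_powr filterlim_real_sequentially) simp
  then have lim: "(\<lambda>m. exp (-1) * real m powr (- 1/6)) \<longlonglongrightarrow> 0" by simp
  have "eventually (\<lambda>m. norm (ak m) \<le> exp (-1) * real m powr (- 1/6)) sequentially"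
  proof (rule eventually_sequentiallyI[of 1])
    fix m :: nat assume m: "1 \<le> m"
    have "ak m * real m powr (1/6) \<le> exp (-1)" by (rule ak_bound[OF m])
    moreover have PQ: "real m powr (1/6) * real m powr (- 1/6) = 1" using m by (simp add: powr_add[symmetric])
    ultimately have I: "(ak m * real m powr (1/6)) * real m powr (- 1/6) \<le> exp (-1) * real m powr (- 1/6)"
      by (intro mult_right_mono) auto
    have E: "(ak m * real m powr (1/6)) * real m powr (- 1/6) = ak m" using PQ by (simp add: mult.assoc)
    have "ak m \<le> exp (-1) * real m powr (- 1/6)" using I unfolding E .
    then show "norm (ak m) \<le> exp (-1) * real m powr (- 1/6)"
      using ak_nonneg[of m] by simp
  qed
  then have "ak \<longlonglongrightarrow> 0" by (rule Lim_null_comparison[OF _ lim])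
  then show ?thesis by (rule LIMSEQ_Suc)
qed



definition Wn :: "real \<Rightarrow> (real \<Rightarrow> real) \<Rightarrow> real \<Rightarrow> real" where
  "Wn T g x = (1/T) * (LINT t:{x..exp T * x}|lborel. g t / t)"

definition Aw :: "real \<Rightarrow> (real \<Rightarrow> real) \<Rightarrow> ereal" where
  "Aw T g = Limsup at_top (\<lambda>x. ereal (Wn T g x))"

lemma ereal_le_by_real:
  fixes x y :: ereal
  assumes "\<And>a::real. y < ereal a \<Longrightarrow> x \<le> ereal a"
  shows "x \<le> y"
proof (rule dense_ge)
  fix z assume "y < z"
  then show "x \<le> z" using assms by (cases z) auto
qed

lemma int_c_inv: fixes x T c :: real assumes "0 < x" "0 \<le> T" shows "(LINT t:{x..exp T * x}|lborel. c / t) = c * T"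
proof -
  have "(LINT t:{x..exp T * x}|lborel. c / t) = (LINT t:{x..exp T * x}|lborel. c * (1 / t))"
    by (rule setcong) auto
  also have "\<dots> = c * (LINT t:{x..exp T * x}|lborel. 1 / t)" by (rule set_integral_mult_right)
  also have "\<dots> = c * (ln (exp T * x) - ln x)" using int_inv[of x "exp T * x"] assms by simp
  finally have "(LINT t:{x..exp T * x}|lborel. c / t) = c * (ln (exp T * x) - ln x)" .
  then show ?thesis using assms by (simp add: ln_mult)
qed

lemma hdiv_bnd:
  assumes h: "bnd C h" and x: "0 < x" and t: "x \<le> t"
  shows "\<bar>h t / t\<bar> \<le> C / x"
proof -
  have "\<bar>h t\<bar> / t \<le> C / t" using bnd_le[OF h, of t] x t by (simp add: divide_right_mono)
  also have "\<dots> \<le> C / x" using bnd_C[OF h] x t by (simp add: divide_left_mono)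
  finally show ?thesis using x t by (simp add: abs_div)
qed

lemma Wn_abs: assumes h: "bnd C h" and T: "0 < T" and x: "0 < x" shows "\<bar>Wn T h x\<bar> \<le> C"
proof -
  note [measurable] = bnd_meas[OF h]
  have "\<bar>LINT t:{x..exp T * x}|lborel. h t / t\<bar> \<le> (LINT t:{x..exp T * x}|lborel. C / t)"
  proof (rule int_abs_le[where B="C / x"])
    fix t assume t: "x \<le> t" "t \<le> exp T * x"
    show "\<bar>h t / t\<bar> \<le> C / t" using bnd_le[OF h, of t] x t by (simp add: abs_div divide_right_mono)
    show "\<bar>C / t\<bar> \<le> C / x" using bnd_C[OF h] x t by (simp add: divide_left_mono)
  qed (use x T in auto)
  also have "\<dots> = C * T" using int_c_inv[of x T C] x T by simp
  finally show ?thesis using T by (simp add: Wn_def abs_mult divide_le_eq mult.commute)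
qed

lemma Wn_U:
  assumes h: "bnd C h" and T: "0 < T" and x: "1 \<le> x"
  shows "Wn T h x = Wn T (U h) x + (U h (exp T * x) - U h x) / T"
proof -
  have "x \<le> exp T * x" using T x by simp
  from identI[OF h x this] have I: "(LINT t:{x..exp T * x}|lborel. h t / t) = (LINT t:{x..exp T * x}|lborel. U h t / t) + (U h (exp T * x) - U h x)" by simp
  show ?thesis unfolding Wn_def I using T by (simp add: field_simps)
qed

lemma Aw_U_step:
  assumes h: "bnd C h" and T: "0 < T"
  shows "Aw T h \<le> Aw T (U h) + ereal (2 * C / T)"
proof -
  have "eventually (\<lambda>x. ereal (Wn T h x) \<le> ereal (Wn T (U h) x) + ereal (2 * C / T)) at_top"
  proof (rule eventually_mono[OF eventually_ge_at_top[of 1]])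
    fix x :: real assume x: "1 \<le> x"
    have "\<bar>U h (exp T * x) - U h x\<bar> \<le> 2 * C" using U_abs[OF h, of "exp T * x"] U_abs[OF h, of x] by linarith
    then have "(U h (exp T * x) - U h x) / T \<le> 2 * C / T" using T by (simp add: divide_right_mono)
    then show "ereal (Wn T h x) \<le> ereal (Wn T (U h) x) + ereal (2 * C / T)"
      using Wn_U[OF h T x] by simp
  qed
  then have "Aw T h \<le> Limsup at_top (\<lambda>x. ereal (Wn T (U h) x) + ereal (2 * C / T))"
    unfolding Aw_def by (rule Limsup_mono)
  also have "\<dots> = Aw T (U h) + ereal (2 * C / T)"
    unfolding Aw_def by (rule Limsup_add_ereal_right) auto
  finally show ?thesis .
qed

lemma Aw_le_Limsup:
  assumes V: "bnd C V" and T: "0 < T"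
  shows "Aw T V \<le> Limsup at_top (\<lambda>x. ereal (V x))"
proof (rule ereal_le_by_real)
  note [measurable] = bnd_meas[OF V]
  fix a :: real assume a: "Limsup at_top (\<lambda>x. ereal (V x)) < ereal a"
  have "eventually (\<lambda>x. ereal (V x) < ereal a) at_top" by (rule Limsup_lessD[OF a])
  then obtain Z where Z: "\<And>x. Z \<le> x \<Longrightarrow> V x < a" by (auto simp: eventually_at_top_linorder)
  have "eventually (\<lambda>x. ereal (Wn T V x) \<le> ereal a) at_top"
  proof (rule eventually_mono[OF eventually_ge_at_top[of "max Z 1"]])
    fix x :: real assume x: "max Z 1 \<le> x"
    have "(LINT t:{x..exp T * x}|lborel. V t / t) \<le> (LINT t:{x..exp T * x}|lborel. a / t)"
    proof (rule int_le[where B="C + \<bar>a\<bar>"])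
      fix t assume t: "x \<le> t" "t \<le> exp T * x"
      then have t1: "1 \<le> t" "Z \<le> t" using x by auto
      show "V t / t \<le> a / t" using Z[OF t1(2)] t1 by (simp add: divide_right_mono)
      show "\<bar>V t / t\<bar> \<le> C + \<bar>a\<bar>" using hdiv_bnd[OF V, of 1 t] t1 by simp
      show "\<bar>a / t\<bar> \<le> C + \<bar>a\<bar>" using t1 bnd_C[OF V] mult_left_mono[of 1 t "C + \<bar>a\<bar>"] by (simp add: abs_div divide_le_eq)
    qed auto
    also have "\<dots> = a * T" using int_c_inv[of x T a] x T by simp
    finally show "ereal (Wn T V x) \<le> ereal a" using T by (simp add: Wn_def divide_le_eq mult.commute)
  qed
  then show "Aw T V \<le> ereal a" unfolding Aw_def by (rule Limsup_bounded)
qed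



lemma int_c_inv2: fixes x t c :: real assumes "0 < x" "x \<le> t" shows "(LINT s:{x..t}|lborel. c / s) = c * (ln t - ln x)"
proof -
  have "(LINT s:{x..t}|lborel. c / s) = (LINT s:{x..t}|lborel. c * (1 / s))"
    by (rule setcong) auto
  also have "\<dots> = c * (LINT s:{x..t}|lborel. 1 / s)" by (rule set_integral_mult_right)
  also have "\<dots> = c * (ln t - ln x)" using int_inv[of x t] assms by simp
  finally show ?thesis .
qed

lemma bnd_Kf: "bnd C g \<Longrightarrow> bnd C (Kf k g)"
  using bnd_Upow[of C g "Suc k"] Upow_Kf[of C g k] by simp

lemma slow:
  assumes g: "bnd C g" and T: "0 < T" and x: "1 \<le> x"
  shows "Kf (Suc k) g x \<le> Wn T (Kf (Suc k) g) x + 2 * C * ak (Suc k) * T"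
proof -
  define W where "W = Kf k g"
  define V where "V = Kf (Suc k) g"
  define \<delta> where "\<delta> = 2 * C * ak (Suc k)"
  have bW: "bnd C W" unfolding W_def by (rule bnd_Kf[OF g])
  have bV: "bnd C V" unfolding V_def by (rule bnd_Kf[OF g])
  note [measurable] = bnd_meas[OF bW] bnd_meas[OF bV]
  have VU: "U W = V" unfolding W_def V_def using U_Kf[OF g] by (simp add: fun_eq_iff)
  have dWV: "\<bar>W t - V t\<bar> \<le> \<delta>" for t unfolding W_def V_def \<delta>_def by (rule Kf_diff[OF g])
  have d0: "0 \<le> \<delta>" using dWV[of 0] by linarith
  have Vt: "V x - \<delta> * T \<le> V t" if t: "x \<le> t" "t \<le> exp T * x" for t
  proof -
    have I: "(LINT s:{x..t}|lborel. W s / s) = (LINT s:{x..t}|lborel. V s / s) + V t - V x"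
      using identI[OF bW x t(1)] unfolding VU .
    have iW: "set_integrable lborel {x..t} (\<lambda>s. W s / s)"
      by (rule si_bound[where B=C]) (use hdiv_bnd[OF bW, of 1] x in auto)
    have iV: "set_integrable lborel {x..t} (\<lambda>s. V s / s)"
      by (rule si_bound[where B=C]) (use hdiv_bnd[OF bV, of 1] x in auto)
    have "V t - V x = (LINT s:{x..t}|lborel. W s / s - V s / s)"
      using I set_integral_diff(2)[OF iW iV] by simp
    also have "\<dots> \<ge> - (LINT s:{x..t}|lborel. \<delta> / s)"
    proof -
      have "\<bar>LINT s:{x..t}|lborel. W s / s - V s / s\<bar> \<le> (LINT s:{x..t}|lborel. \<delta> / s)"
      proof (rule int_abs_le[where B=\<delta>])
        fix s assume s: "x \<le> s" "s \<le> t"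
        then have s1: "1 \<le> s" using x by simp
        have "\<bar>W s / s - V s / s\<bar> = \<bar>W s - V s\<bar> / s" using s1 by (simp add: diff_divide_distrib[symmetric] abs_div)
        also have "\<dots> \<le> \<delta> / s" using dWV[of s] s1 by (simp add: divide_right_mono)
        finally show "\<bar>W s / s - V s / s\<bar> \<le> \<delta> / s" .
        show "\<bar>\<delta> / s\<bar> \<le> \<delta>" using s1 d0 by (simp add: divide_le_eq) (metis mult_left_mono mult.right_neutral)
      qed (use t in auto)
      then show ?thesis by linarith
    qed
    finally have "V t - V x \<ge> - (\<delta> * (ln t - ln x))" using int_c_inv2[of x t \<delta>] x t by simp
    moreover have "ln t - ln x \<le> T"
    proof -
      have "ln t \<le> ln (exp T * x)" using t x by simp
      then show ?thesis using x by (simp add: ln_mult)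
    qed
    ultimately show ?thesis using d0 by (smt (verit) mult_left_mono)
  qed
  have "(LINT t:{x..exp T * x}|lborel. (V x - \<delta> * T) / t) \<le> (LINT t:{x..exp T * x}|lborel. V t / t)"
  proof (rule int_le[where B="C + \<bar>V x - \<delta> * T\<bar>"])
    fix t assume t: "x \<le> t" "t \<le> exp T * x"
    then have t1: "1 \<le> t" using x by simp
    show "(V x - \<delta> * T) / t \<le> V t / t" using Vt[OF t] t1 by (simp add: divide_right_mono)
    show "\<bar>V t / t\<bar> \<le> C + \<bar>V x - \<delta> * T\<bar>" using hdiv_bnd[OF bV, of 1 t] t1 by simp
    show "\<bar>(V x - \<delta> * T) / t\<bar> \<le> C + \<bar>V x - \<delta> * T\<bar>"
      using t1 bnd_C[OF bV] mult_left_mono[of 1 t "C + \<bar>V x - \<delta> * T\<bar>"] by (simp add: abs_div divide_le_eq)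
  qed auto
  also have "(LINT t:{x..exp T * x}|lborel. (V x - \<delta> * T) / t) = (V x - \<delta> * T) * T"
    using int_c_inv[of x T] x T by simp
  finally have "(V x - \<delta> * T) * T \<le> (LINT t:{x..exp T * x}|lborel. V t / t)" .
  then have "V x - \<delta> * T \<le> Wn T V x" using T by (simp add: Wn_def field_simps)
  then show ?thesis unfolding V_def \<delta>_def by simp
qed



definition hz :: "(real \<Rightarrow> real) \<Rightarrow> real \<Rightarrow> real" where
  "hz h t = (if 1 \<le> t then h t else 0)"

lemma bnd_hz: assumes "bnd C h" shows "bnd C (hz h)"
proof -
  note [measurable] = bnd_meas[OF assms]
  have "hz h \<in> borel_measurable borel" unfolding hz_def by measurable
  then show ?thesis using assms bnd_C[OF assms] by (auto simp: bnd_def hz_def)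
qed

lemma U_dil:
  assumes h: "bnd C h" and y: "0 < y"
  shows "U h y = (\<integral>v. indicator {0..1} v * hz h (v * y) \<partial>lborel)"
proof -
  have "(LINT t:{1..y}|lborel. h t) = (\<integral>t. indicator {0..y} t * hz h t \<partial>lborel)"
    unfolding set_lebesgue_integral_def
    by (rule Bochner_Integration.integral_cong) (auto simp: hz_def indicator_def)
  also have "\<dots> = \<bar>y\<bar> *\<^sub>R (\<integral>v. indicator {0..y} (0 + y * v) * hz h (0 + y * v) \<partial>lborel)"
    by (rule lborel_integral_real_affine) (use y in simp)
  also have "\<dots> = y * (\<integral>v. indicator {0..1} v * hz h (v * y) \<partial>lborel)"
  proof -
    have "(\<lambda>v. indicator {0..y} (0 + y * v) * hz h (0 + y * v)) = (\<lambda>v. indicator {0..1} v * hz h (v * y))"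
      using y by (auto simp: fun_eq_iff indicator_def mult.commute zero_le_mult_iff mult_le_cancel_left1)
    then show ?thesis using y by simp
  qed
  finally show ?thesis using y by (simp add: U_def)
qed



lemma dil_fub:
  assumes h: "bnd C h" and T: "0 < T" and x: "0 < x"
  shows "T * Wn T (U h) x = (LINT v:{0..1}|lborel. (\<integral>y. indicator {x..exp T * x} y * (hz h (v * y) / y) \<partial>lborel))"
proof -
  have hh: "bnd C (hz h)" by (rule bnd_hz[OF h])
  note [measurable] = bnd_meas[OF hh]
  have C0: "0 \<le> C" using bnd_C[OF h] .
  define \<Phi> where "\<Phi> v y = indicator {0..1} v * indicator {x..exp T * x} y * (hz h (v * y) / y)" for v y :: real
  have meas: "(\<lambda>p. \<Phi> (fst p) (snd p)) \<in> borel_measurable (lborel \<Otimes>\<^sub>M lborel)"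
    unfolding \<Phi>_def by measurable
  have int: "integrable (lborel \<Otimes>\<^sub>M lborel) (case_prod \<Phi>)"
  proof (rule integrableI_bounded_set[where A="{0..1} \<times> {x..exp T * x}" and B="C / x"])
    show "{0..1::real} \<times> {x..exp T * x} \<in> sets (lborel \<Otimes>\<^sub>M lborel)" by (rule pair_measureI) auto
    show "case_prod \<Phi> \<in> borel_measurable (lborel \<Otimes>\<^sub>M lborel)"
      using meas by (simp add: case_prod_beta')
    show "emeasure (lborel \<Otimes>\<^sub>M lborel) ({0..1::real} \<times> {x..exp T * x}) < \<infinity>"
      by (subst lborel.emeasure_pair_measure_Times) (auto simp: ennreal_mult_less_top emeasure_lborel_Icc_eq)
    show "AE p in lborel \<Otimes>\<^sub>M lborel. p \<in> {0..1::real} \<times> {x..exp T * x} \<longrightarrow> norm (case_prod \<Phi> p) \<le> C / x"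
    proof (rule AE_I2, rule impI)
      fix p :: "real \<times> real" assume "p \<in> {0..1} \<times> {x..exp T * x}"
      then obtain v y where p: "p = (v, y)" and "x \<le> y" by auto
      have a: "\<bar>hz h (v * y)\<bar> \<le> C" by (rule bnd_le[OF hh])
      have "\<bar>hz h (v * y) / y\<bar> \<le> C / y" using a \<open>x \<le> y\<close> x by (simp add: abs_div divide_right_mono)
      also have "\<dots> \<le> C / x" using C0 \<open>x \<le> y\<close> x by (simp add: divide_left_mono)
      finally have b: "\<bar>hz h (v * y) / y\<bar> \<le> C / x" .
      have c: "0 \<le> C / x" using C0 x by simp
      show "norm (case_prod \<Phi> p) \<le> C / x" using b c by (simp add: p \<Phi>_def indicator_def)
    qed
    show "AE p in lborel \<Otimes>\<^sub>M lborel. p \<notin> {0..1::real} \<times> {x..exp T * x} \<longrightarrow> case_prod \<Phi> p = 0"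
      by (rule AE_I2) (auto simp: \<Phi>_def indicator_def)
  qed
  have L: "T * Wn T (U h) x = (\<integral>y. (\<integral>v. \<Phi> v y \<partial>lborel) \<partial>lborel)"
  proof -
    have "T * Wn T (U h) x = (\<integral>y. indicator {x..exp T * x} y * (U h y / y) \<partial>lborel)"
      using T by (simp add: Wn_def set_lebesgue_integral_def)
    also have "\<dots> = (\<integral>y. (\<integral>v. \<Phi> v y \<partial>lborel) \<partial>lborel)"
    proof (rule Bochner_Integration.integral_cong[OF refl])
      fix y :: real
      show "indicator {x..exp T * x} y * (U h y / y) = (\<integral>v. \<Phi> v y \<partial>lborel)"
      proof (cases "y \<in> {x..exp T * x}")
        case True
        then have y0: "0 < y" using x by auto
        have "(\<integral>v. \<Phi> v y \<partial>lborel) = (\<integral>v. indicator {0..1} v * hz h (v * y) * (indicator {x..exp T * x} y / y) \<partial>lborel)"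
          by (rule Bochner_Integration.integral_cong) (auto simp: \<Phi>_def)
        also have "\<dots> = U h y * (indicator {x..exp T * x} y / y)"
          by (simp only: integral_mult_left_zero U_dil[OF h y0])
        finally show ?thesis by simp
      next
        case False then show ?thesis by (simp add: \<Phi>_def)
      qed
    qed
    finally show ?thesis .
  qed
  have R: "(LINT v:{0..1}|lborel. (\<integral>y. indicator {x..exp T * x} y * (hz h (v * y) / y) \<partial>lborel))
     = (\<integral>v. (\<integral>y. \<Phi> v y \<partial>lborel) \<partial>lborel)"
    unfolding set_lebesgue_integral_def
  proof (rule Bochner_Integration.integral_cong[OF refl])
    fix v :: real
    have "(\<integral>y. \<Phi> v y \<partial>lborel) = (\<integral>y. indicator {0..1} v * (indicator {x..exp T * x} y * (hz h (v * y) / y)) \<partial>lborel)"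
      by (rule Bochner_Integration.integral_cong) (auto simp: \<Phi>_def)
    then show "indicator {0..1} v *\<^sub>R (\<integral>y. indicator {x..exp T * x} y * (hz h (v * y) / y) \<partial>lborel) = (\<integral>y. \<Phi> v y \<partial>lborel)"
      by (simp only: integral_mult_right_zero) simp
  qed
  show ?thesis unfolding L R by (rule lborel_pair.Fubini_integral[OF int])
qed

lemma dil_inner:
  assumes h: "bnd C h" and T: "0 < T" and x: "0 < x" and v: "0 < v"
  shows "(\<integral>y. indicator {x..exp T * x} y * (hz h (v * y) / y) \<partial>lborel) = T * Wn T (hz h) (v * x)"
proof -
  have "T * Wn T (hz h) (v * x) = (\<integral>s. indicator {v * x..exp T * (v * x)} s * (hz h s / s) \<partial>lborel)"
    using T by (simp add: Wn_def set_lebesgue_integral_def)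
  also have "\<dots> = \<bar>v\<bar> *\<^sub>R (\<integral>y. indicator {v * x..exp T * (v * x)} (0 + v * y) * (hz h (0 + v * y) / (0 + v * y)) \<partial>lborel)"
    by (rule lborel_integral_real_affine) (use v in simp)
  also have "\<dots> = (\<integral>y. indicator {x..exp T * x} y * (hz h (v * y) / y) \<partial>lborel)"
  proof -
    have "(\<lambda>y. indicator {v * x..exp T * (v * x)} (0 + v * y) * (hz h (0 + v * y) / (0 + v * y)))
        = (\<lambda>y. (1 / v) * (indicator {x..exp T * x} y * (hz h (v * y) / y)))"
    proof
      fix y
      have iff: "(v * y \<in> {v * x..exp T * (v * x)}) = (y \<in> {x..exp T * x})"
        using v by (simp add: mult.left_commute[of "exp T"] mult_le_cancel_left_pos)
      have "hz h (v * y) / (v * y) = (1 / v) * (hz h (v * y) / y)" using v by simp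
      then show "indicator {v * x..exp T * (v * x)} (0 + v * y) * (hz h (0 + v * y) / (0 + v * y))
        = (1 / v) * (indicator {x..exp T * x} y * (hz h (v * y) / y))"
        using iff by (simp add: indicator_def)
    qed
    then have "(\<integral>y. indicator {v * x..exp T * (v * x)} (0 + v * y) * (hz h (0 + v * y) / (0 + v * y)) \<partial>lborel)
       = (1 / v) * (\<integral>y. indicator {x..exp T * x} y * (hz h (v * y) / y) \<partial>lborel)"
      by (simp only: integral_mult_right_zero)
    then show ?thesis using v by simp
  qed
  finally show ?thesis by simp
qed



lemma Wn_hz: assumes "1 \<le> z" "0 < T" shows "Wn T (hz h) z = Wn T h z"
proof -
  have "(LINT t:{z..exp T * z}|lborel. hz h t / t) = (LINT t:{z..exp T * z}|lborel. h t / t)"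
    by (rule setcong) (use assms in \<open>auto simp: hz_def\<close>)
  then show ?thesis by (simp add: Wn_def)
qed

lemma Aw_U_le:
  assumes h: "bnd C h" and T: "0 < T"
  shows "Aw T (U h) \<le> Aw T h"
proof (rule ereal_le_by_real)
  have hh: "bnd C (hz h)" by (rule bnd_hz[OF h])
  note [measurable] = bnd_meas[OF hh]
  have C0: "0 \<le> C" using bnd_C[OF h] .
  define G where "G x v = (\<integral>y. indicator {x..exp T * x} y * (hz h (v * y) / y) \<partial>lborel)" for x v :: real
  have Gm[measurable]: "G x \<in> borel_measurable borel" for x
    unfolding G_def by measurable
  have Gb: "\<bar>G x v\<bar> \<le> C * T" if x: "0 < x" and v: "0 \<le> v" "v \<le> 1" for x v
  proof (cases "v = 0")
    case True then show ?thesis using C0 T by (simp add: G_def hz_def)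
  next
    case False
    then have v0: "0 < v" using v by simp
    have "G x v = T * Wn T (hz h) (v * x)" unfolding G_def by (rule dil_inner[OF h T x v0])
    moreover have "\<bar>Wn T (hz h) (v * x)\<bar> \<le> C" by (rule Wn_abs[OF hh T]) (use x v0 in simp)
    ultimately show ?thesis using T by (simp add: abs_mult mult.commute mult_left_mono)
  qed
  fix a :: real assume a: "Aw T h < ereal a"
  have "eventually (\<lambda>z. ereal (Wn T h z) < ereal a) at_top" using Limsup_lessD[OF a[unfolded Aw_def]] .
  then obtain Z0 where Z0: "\<And>z. Z0 \<le> z \<Longrightarrow> Wn T h z < a" by (auto simp: eventually_at_top_linorder)
  define Z where "Z = max Z0 1"
  have Z1: "1 \<le> Z" and Z: "\<And>z. Z \<le> z \<Longrightarrow> Wn T h z < a" using Z0 by (auto simp: Z_def)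
  have main: "Wn T (U h) x \<le> a + (C - a) * (Z / x)" if x: "Z \<le> x" for x
  proof -
    define r where "r = Z / x"
    have x0: "0 < x" using x Z1 by simp
    have r0: "0 \<le> r" "r \<le> 1" using x Z1 x0 by (auto simp: r_def)
    have iG: "set_integrable lborel {0..1} (G x)"
      by (rule si_bound[where B="C * T"]) (use Gb[OF x0] in auto)
    have "T * Wn T (U h) x = (LINT v:{0..1}|lborel. G x v)" unfolding G_def by (rule dil_fub[OF h T x0])
    also have "\<dots> = (LINT v:{0..r}|lborel. G x v) + (LINT v:{r..1}|lborel. G x v)"
      by (rule Icc_split[OF r0 iG])
    also have "\<dots> \<le> C * T * r + a * T * (1 - r)"
    proof (rule add_mono)
      have "\<bar>LINT v:{0..r}|lborel. G x v\<bar> \<le> (C * T) * (r - 0)"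
        by (rule int_bound) (use Gb[OF x0] r0 in auto)
      then show "(LINT v:{0..r}|lborel. G x v) \<le> C * T * r" by simp
      have "(LINT v:{r..1}|lborel. G x v) \<le> (LINT v:{r..1}|lborel. a * T)"
      proof (rule int_le[where B="C * T + \<bar>a\<bar> * T"])
        fix v assume v: "r \<le> v" "v \<le> 1"
        have "0 < r" using Z1 x0 by (simp add: r_def)
        then have v0: "0 < v" using v by simp
        have vx: "Z \<le> v * x" using v x0 by (simp add: r_def divide_le_eq mult.commute)
        have "G x v = T * Wn T (hz h) (v * x)" unfolding G_def by (rule dil_inner[OF h T x0 v0])
        also have "\<dots> = T * Wn T h (v * x)" using Wn_hz[of "v * x" T h] vx Z1 T by simp
        also have "\<dots> \<le> T * a" using Z[OF vx] T by (simp add: less_imp_le)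
        finally show "G x v \<le> a * T" by (simp add: mult.commute)
        have "0 \<le> \<bar>a\<bar> * T" using T by simp
        then show "\<bar>G x v\<bar> \<le> C * T + \<bar>a\<bar> * T" using Gb[OF x0, of v] v r0 T by linarith
        show "\<bar>a * T\<bar> \<le> C * T + \<bar>a\<bar> * T" using T C0 by (simp add: abs_mult)
      qed auto
      also have "\<dots> = a * T * (1 - r)" using r0 by (simp add: int_const)
      finally show "(LINT v:{r..1}|lborel. G x v) \<le> a * T * (1 - r)" .
    qed
    finally have "T * Wn T (U h) x \<le> T * (a + (C - a) * r)" by (simp add: algebra_simps)
    then show ?thesis using T by (simp add: r_def)
  qed
  have "Aw T (U h) \<le> ereal a + ereal e" if e: "0 < e" for e
  proof -
    have "eventually (\<lambda>x. ereal (Wn T (U h) x) \<le> ereal (a + e)) at_top"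
    proof (rule eventually_mono[OF eventually_ge_at_top[of "max Z (\<bar>C - a\<bar> * Z / e)"]])
      fix x assume x: "max Z (\<bar>C - a\<bar> * Z / e) \<le> x"
      then have x0: "0 < x" using Z1 by simp
      have "\<bar>C - a\<bar> * Z \<le> e * x" using x e by (simp add: divide_le_eq mult.commute)
      then have "(C - a) * (Z / x) \<le> e" using x0 Z1
        by (simp add: divide_le_eq) (smt (verit, best) abs_ge_self mult_right_mono)
      then show "ereal (Wn T (U h) x) \<le> ereal (a + e)" using main[of x] x by simp
    qed
    then have "Aw T (U h) \<le> ereal (a + e)" unfolding Aw_def by (rule Limsup_bounded)
    then show ?thesis by simp
  qed
  then show "Aw T (U h) \<le> ereal a" by (rule ereal_le_epsilon2)
qed



lemma Aw_chain_up:
  assumes g: "bnd C g" and T: "0 < T"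
  shows "Aw T g \<le> Aw T ((U ^^ n) g) + ereal (2 * real n * C / T)"
proof (induction n)
  case 0 then show ?case by simp
next
  case (Suc n)
  have "Aw T ((U ^^ n) g) \<le> Aw T (U ((U ^^ n) g)) + ereal (2 * C / T)"
    by (rule Aw_U_step[OF bnd_Upow[OF g] T])
  then have "Aw T g \<le> Aw T (U ((U ^^ n) g)) + ereal (2 * C / T) + ereal (2 * real n * C / T)"
    using Suc by (metis add_right_mono order_trans)
  also have "\<dots> = Aw T ((U ^^ Suc n) g) + ereal (2 * real (Suc n) * C / T)"
    by (simp add: add.assoc add_divide_distrib[symmetric] algebra_simps)
  finally show ?case .
qed

lemma Aw_chain_down:
  assumes g: "bnd C g" and T: "0 < T"
  shows "Aw T ((U ^^ n) g) \<le> Aw T g"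
proof (induction n)
  case 0 then show ?case by simp
next
  case (Suc n)
  have "Aw T (U ((U ^^ n) g)) \<le> Aw T ((U ^^ n) g)" by (rule Aw_U_le[OF bnd_Upow[OF g] T])
  then show ?case using Suc by simp
qed

lemma boundA:
  assumes g: "bnd C g" and T: "0 < T"
  shows "Aw T g \<le> Limsup at_top (\<lambda>x. ereal ((U ^^ Suc k) g x)) + ereal (2 * real (Suc k) * C / T)"
proof -
  have "Aw T g \<le> Aw T ((U ^^ Suc k) g) + ereal (2 * real (Suc k) * C / T)" by (rule Aw_chain_up[OF g T])
  also have "\<dots> \<le> Limsup at_top (\<lambda>x. ereal ((U ^^ Suc k) g x)) + ereal (2 * real (Suc k) * C / T)"
    by (rule add_right_mono) (rule Aw_le_Limsup[OF bnd_Upow[OF g] T])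
  finally show ?thesis .
qed

lemma boundB:
  assumes g: "bnd C g" and T: "0 < T" and k: "1 \<le> k"
  shows "Limsup at_top (\<lambda>x. ereal ((U ^^ Suc k) g x)) \<le> Aw T g + ereal (2 * C * ak k * T)"
proof -
  obtain j where kj: "k = Suc j" using k by (cases k) auto
  have V: "(U ^^ Suc k) g = Kf (Suc j) g" unfolding kj by (rule Upow_Kf[OF g])
  have "eventually (\<lambda>x. ereal ((U ^^ Suc k) g x) \<le> ereal (Wn T ((U ^^ Suc k) g) x) + ereal (2 * C * ak k * T)) at_top"
  proof (rule eventually_mono[OF eventually_ge_at_top[of 1]])
    fix x :: real assume x: "1 \<le> x"
    show "ereal ((U ^^ Suc k) g x) \<le> ereal (Wn T ((U ^^ Suc k) g) x) + ereal (2 * C * ak k * T)"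
      using slow[OF g T x, of j] unfolding V by (simp add: kj)
  qed
  then have "Limsup at_top (\<lambda>x. ereal ((U ^^ Suc k) g x)) \<le> Limsup at_top (\<lambda>x. ereal (Wn T ((U ^^ Suc k) g) x) + ereal (2 * C * ak k * T))"
    by (rule Limsup_mono)
  also have "\<dots> = Aw T ((U ^^ Suc k) g) + ereal (2 * C * ak k * T)"
    unfolding Aw_def by (rule Limsup_add_ereal_right) auto
  also have "\<dots> \<le> Aw T g + ereal (2 * C * ak k * T)"
    by (rule add_right_mono) (rule Aw_chain_down[OF g T])
  finally show ?thesis .
qed



lemma Linf_reduce:
  assumes f: "f \<in> Linf"
  obtains C g where "bnd C g" "U f = U g"
    "\<And>x \<theta>. 1 \<le> x \<Longrightarrow> (LINT t:{x..\<theta> * x}|lborel. f t / t) = (LINT t:{x..\<theta> * x}|lborel. g t / t)"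
proof -
  from f obtain C0 where m: "(\<lambda>x. indicator {1..} x *\<^sub>R f x) \<in> borel_measurable lborel"
    and ae: "AE x in lborel. x \<in> {1..} \<longrightarrow> \<bar>f x\<bar> \<le> C0"
    by (auto simp: Linf_def set_borel_measurable_def)
  define C where "C = max C0 0"
  define f1 where "f1 x = indicator {1..} x * f x" for x :: real
  have "f1 = (\<lambda>x. indicator {1..} x * f x)" by (simp add: fun_eq_iff f1_def)
  then have f1m[measurable]: "f1 \<in> borel_measurable borel" using m by simp
  define g where "g x = (if \<bar>f1 x\<bar> \<le> C then f1 x else 0)" for x
  have gm[measurable]: "g \<in> borel_measurable borel" unfolding g_def by measurable
  have bg: "bnd C g" unfolding bnd_def using gm by (auto simp: g_def C_def)
  have ae2: "AE x in lborel. f1 x = g x"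
    using ae by eventually_elim (auto simp: f1_def g_def C_def indicator_def)
  have key: "(LINT t:A|lborel. f t * w t) = (LINT t:A|lborel. g t * w t)"
    if A: "A \<subseteq> {1..}" "A \<in> sets borel" and [measurable]: "w \<in> borel_measurable borel" for A w
  proof -
    have "(LINT t:A|lborel. f t * w t) = (LINT t:A|lborel. f1 t * w t)"
      by (rule setcong) (use A in \<open>auto simp: f1_def indicator_def\<close>)
    also have "\<dots> = (LINT t:A|lborel. g t * w t)"
      by (rule set_lebesgue_integral_cong_AE) (use A ae2 in \<open>auto elim: AE_mp\<close>)
    finally show ?thesis .
  qed
  show ?thesis
  proof (rule that[OF bg])
    show "U f = U g"
    proof
      fix x
      have "(LINT t:{1..x}|lborel. f t * 1) = (LINT t:{1..x}|lborel. g t * 1)"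
        by (rule key) auto
      then show "U f x = U g x" by (simp add: U_def)
    qed
    fix x \<theta> :: real assume x: "1 \<le> x"
    have "(LINT t:{x..\<theta> * x}|lborel. f t * (1 / t)) = (LINT t:{x..\<theta> * x}|lborel. g t * (1 / t))"
      by (rule key) (use x in auto)
    then show "(LINT t:{x..\<theta> * x}|lborel. f t / t) = (LINT t:{x..\<theta> * x}|lborel. g t / t)" by simp
  qed
qed

lemma Linf_uminus: "f \<in> Linf \<Longrightarrow> (\<lambda>x. - f x) \<in> Linf"
  unfolding Linf_def set_borel_measurable_def by auto



lemma main_eq:
  assumes f: "f \<in> Linf"
  shows "H_inf_upper f = L1_upper f"
proof -
  obtain C g where g: "bnd C g" and Ufg: "U f = U g"
    and win: "\<And>x \<theta>. 1 \<le> x \<Longrightarrow> (LINT t:{x..\<theta> * x}|lborel. f t / t) = (LINT t:{x..\<theta> * x}|lborel. g t / t)"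
    using Linf_reduce[OF f] by blast
  have C0: "0 \<le> C" using bnd_C[OF g] .
  define h where "h k = H_upper (Suc k) f" for k
  define A where "A \<theta> = Limsup at_top (\<lambda>x. ereal ((1 / ln \<theta>) * (LINT t:{x..\<theta> * x}|lborel. f t / t)))" for \<theta> :: real
  have hk: "h k = Limsup at_top (\<lambda>x. ereal ((U ^^ Suc k) g x))" for k
  proof -
    have "(U ^^ Suc k) f = (U ^^ k) (U f)" by (simp only: funpow_Suc_right comp_apply)
    also have "\<dots> = (U ^^ Suc k) g" by (simp only: Ufg funpow_Suc_right comp_apply)
    finally show ?thesis by (simp add: h_def H_upper_def)
  qed
  have AW: "A \<theta> = Aw (ln \<theta>) g" if "1 < \<theta>" for \<theta>
    unfolding A_def Aw_def
  proof (rule Limsup_eq[OF eventually_mono[OF eventually_ge_at_top[of 1]]])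
    fix x :: real assume x: "1 \<le> x"
    show "ereal ((1 / ln \<theta>) * (LINT t:{x..\<theta> * x}|lborel. f t / t)) = ereal (Wn (ln \<theta>) g x)"
      using win[OF x, of \<theta>] that by (simp add: Wn_def)
  qed
  have BA: "A \<theta> \<le> h k + ereal (2 * real (Suc k) * C / ln \<theta>)" if "1 < \<theta>" for \<theta> k
    unfolding AW[OF that] hk by (rule boundA[OF g]) (use that in simp)
  have BB: "h k \<le> Aw T g + ereal (2 * C * ak k * T)" if "1 \<le> k" "0 < T" for k T
    unfolding hk by (rule boundB[OF g \<open>0 < T\<close> \<open>1 \<le> k\<close>])
  have ak0: "ak \<longlonglongrightarrow> 0" using LIMSEQ_imp_Suc[OF ak_lim] .
  have S1: "Limsup sequentially h \<le> A \<theta>" if th: "1 < \<theta>" for \<theta>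
  proof -
    define T where "T = ln \<theta>"
    have T: "0 < T" using th by (simp add: T_def)
    have "Limsup sequentially h \<le> Aw T g + ereal e" if e: "0 < e" for e
    proof -
      have "(\<lambda>k. 2 * C * ak k * T) \<longlonglongrightarrow> 2 * C * 0 * T"
        by (intro tendsto_intros ak0)
      then have "eventually (\<lambda>k. 2 * C * ak k * T < e) sequentially"
        using e by (intro order_tendstoD) auto
      then have "eventually (\<lambda>k. h k \<le> Aw T g + ereal e) sequentially"
      proof (rule eventually_mono[OF eventually_conj[OF _ eventually_ge_at_top[of 1]]])
        fix k assume k: "2 * C * ak k * T < e \<and> 1 \<le> k"
        have "h k \<le> Aw T g + ereal (2 * C * ak k * T)" using BB[of k T] k T by simp
        also have "\<dots> \<le> Aw T g + ereal e" by (rule add_left_mono) (use k in simp)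
        finally show "h k \<le> Aw T g + ereal e" .
      qed
      then show ?thesis by (rule Limsup_bounded)
    qed
    then have "Limsup sequentially h \<le> Aw T g" by (rule ereal_le_epsilon2)
    then show ?thesis using AW[OF th] by (simp add: T_def)
  qed
  have S2: "Limsup at_top A \<le> h k" for k
  proof -
    have "Limsup at_top A \<le> h k + ereal e" if e: "0 < e" for e
    proof -
      have "eventually (\<lambda>\<theta>. A \<theta> \<le> h k + ereal e) at_top"
      proof (rule eventually_mono[OF eventually_gt_at_top[of "max 1 (exp (2 * real (Suc k) * C / e))"]])
        fix \<theta> :: real assume th: "max 1 (exp (2 * real (Suc k) * C / e)) < \<theta>"
        then have th1: "1 < \<theta>" by simp
        have "exp (2 * real (Suc k) * C / e) < \<theta>" using th by simp
        then have "ln (exp (2 * real (Suc k) * C / e)) < ln \<theta>" using th1 by (subst ln_less_cancel_iff) auto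
        then have "2 * real (Suc k) * C / e < ln \<theta>" by simp
        then have "2 * real (Suc k) * C < e * ln \<theta>" using e by (simp add: divide_less_eq mult.commute)
        then have le: "2 * real (Suc k) * C / ln \<theta> \<le> e" using th1 by (simp add: divide_le_eq mult.commute)
        have "A \<theta> \<le> h k + ereal (2 * real (Suc k) * C / ln \<theta>)" by (rule BA[OF th1])
        also have "\<dots> \<le> h k + ereal e" by (rule add_left_mono) (use le in simp)
        finally show "A \<theta> \<le> h k + ereal e" .
      qed
      then show ?thesis by (rule Limsup_bounded)
    qed
    then show ?thesis by (rule ereal_le_epsilon2)
  qed
  have c1: "Limsup sequentially h \<le> Liminf at_top A"
    by (rule Liminf_bounded[OF eventually_mono[OF eventually_gt_at_top[of 1]]]) (rule S1)
  have c2: "Limsup at_top A \<le> Liminf sequentially h"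
    by (rule Liminf_bounded) (simp add: S2)
  have c3: "Liminf sequentially h \<le> Limsup sequentially h" by (rule Liminf_le_Limsup) simp
  have c4: "Liminf at_top A \<le> Limsup at_top A" by (rule Liminf_le_Limsup) simp
  define L where "L = Limsup sequentially h"
  have "h \<longlonglongrightarrow> L" by (rule Liminf_eq_Limsup) (use c1 c2 c3 c4 in \<open>auto simp: L_def\<close>)
  then have hL: "lim h = L" by (rule limI)
  have "(A \<longlongrightarrow> L) at_top" by (rule Liminf_eq_Limsup) (use c1 c2 c3 c4 in \<open>auto simp: L_def\<close>)
  then have AL: "Lim at_top A = L" by (rule tendsto_Lim[rotated]) simp
  have "h = (\<lambda>k. H_upper (Suc k) f)" by (simp add: fun_eq_iff h_def)
  then have "H_inf_upper f = lim h" by (simp add: H_inf_upper_def)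
  moreover have "A = (\<lambda>\<theta>. Limsup at_top (\<lambda>x. ereal ((1 / ln \<theta>) * (LINT t:{x..\<theta> * x}|lborel. f t / t))))"
    by (simp only: fun_eq_iff A_def) simp
  then have "L1_upper f = Lim at_top A" by (simp only: L1_upper_def)
  ultimately show ?thesis using hL AL by simp
qed

theorem theorem5p1:
  shows "(\<forall>f\<in>Linf. H_inf_upper f = L1_upper f)
         \<and> sdomain H_inf_upper = sdomain L1_upper
         \<and> (\<forall>f\<in>sdomain H_inf_upper. H_inf_upper f = L1_upper f)"
proof (intro conjI ballI)
  show "H_inf_upper f = L1_upper f" if "f \<in> Linf" for f using main_eq[OF that] .
  show "sdomain H_inf_upper = sdomain L1_upper"
    unfolding sdomain_def using main_eq Linf_uminus by auto
  show "H_inf_upper f = L1_upper f" if "f \<in> sdomain H_inf_upper" for f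
    using that main_eq unfolding sdomain_def by blast
qed


end
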